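(* Let $Q$ be a polyhedral partially ordered abelian group and $D\subseteq Q$ a downset. Then $D=\bigcup_\tau P_\tau(D)$, the union over all faces $\tau$ of $Q_+$ for which $\Gamma_\tau(D_\tau)$ is nonempty, and this is a primary decomposition of $D$ (each $P_\tau(D)$ is a coprimary downset).
   Context: A partially ordered abelian group is an abelian group $Q$ generated by a submonoid $Q_+$ (positive cone) whose only unit is $0$; $q\preceq q'$ iff $q'-q\in Q_+$. A face is a submonoid $\sigma\subseteq Q_+$ such that $Q_+\setminus\sigma$ is an ideal of the monoid $Q_+$; $Q$ is polyhedral if there are finitely many faces. A downset is a subset $D\subseteq Q$ with $D-Q_+=D$. For a face $\tau$: $D_\tau=\{q\in D: q+\tau\subseteq D\}$; $q\in D$ is globally supported on $\tau$ if $q\notin D_{\tau'}$ for all faces $\tau'\not\subseteq\tau$, and $\Gamma_\tau D$ is the set of such $q$; the local $\tau$-support is $\Gamma_\tau(D_\tau)$ (elements of $D_\tau$ globally supported on $\tau$ within the downset $D_\tau$); the $\tau$-primary component is the downset $P_\tau(D)=\Gamma_\tau(D_\tau)-Q_+$. A downset $D$ is coprimary ($\tau$-coprimary) if $D=P_\tau(D)$ for some face $\tau$. A primary decomposition of $D$ is an expression $D=\bigcup_{i=1}^r D_i$ with each $D_i$ a coprimary downset. *)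

theory Defs
  imports Main
begin

text \<open>A partially ordered abelian group: the ambient abelian group is the type 'a,
  with positive cone Qp, a submonoid whose only unit is 0 and which generates 'a.\<close>
definition pogroup :: "('a::ab_group_add) set \<Rightarrow> bool" where
  "pogroup Qp \<longleftrightarrow> 0 \<in> Qp \<and> (\<forall>x\<in>Qp. \<forall>y\<in>Qp. x + y \<in> Qp)
     \<and> (\<forall>x\<in>Qp. - x \<in> Qp \<longrightarrow> x = 0)
     \<and> (\<forall>q. \<exists>a\<in>Qp. \<exists>b\<in>Qp. q = a - b)"

definition face :: "('a::ab_group_add) set \<Rightarrow> 'a set \<Rightarrow> bool" where
  "face Qp \<sigma> \<longleftrightarrow> \<sigma> \<subseteq> Qp \<and> 0 \<in> \<sigma> \<and> (\<forall>x\<in>\<sigma>. \<forall>y\<in>\<sigma>. x + y \<in> \<sigma>)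
     \<and> (\<forall>x\<in>Qp - \<sigma>. \<forall>y\<in>Qp. x + y \<in> Qp - \<sigma>)"

definition polyhedral :: "('a::ab_group_add) set \<Rightarrow> bool" where
  "polyhedral Qp \<longleftrightarrow> finite {\<sigma>. face Qp \<sigma>}"

definition downset :: "('a::ab_group_add) set \<Rightarrow> 'a set \<Rightarrow> bool" where
  "downset Qp D \<longleftrightarrow> {d - p | d p. d \<in> D \<and> p \<in> Qp} = D"

definition face_part :: "('a::ab_group_add) set \<Rightarrow> 'a set \<Rightarrow> 'a set" where
  "face_part D \<tau> = {q \<in> D. \<forall>t\<in>\<tau>. q + t \<in> D}"

definition glob_supp :: "('a::ab_group_add) set \<Rightarrow> 'a set \<Rightarrow> 'a set \<Rightarrow> 'a set" where
  "glob_supp Qp \<tau> D = {q \<in> D. \<forall>\<tau>'. face Qp \<tau>' \<and> \<not> \<tau>' \<subseteq> \<tau> \<longrightarrow> q \<notin> face_part D \<tau>'}"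

definition local_supp :: "('a::ab_group_add) set \<Rightarrow> 'a set \<Rightarrow> 'a set \<Rightarrow> 'a set" where
  "local_supp Qp \<tau> D = glob_supp Qp \<tau> (face_part D \<tau>)"

definition primary_comp :: "('a::ab_group_add) set \<Rightarrow> 'a set \<Rightarrow> 'a set \<Rightarrow> 'a set" where
  "primary_comp Qp \<tau> D = {g - p | g p. g \<in> local_supp Qp \<tau> D \<and> p \<in> Qp}"

definition coprimary :: "('a::ab_group_add) set \<Rightarrow> 'a set \<Rightarrow> bool" where
  "coprimary Qp D \<longleftrightarrow> downset Qp D \<and> (\<exists>\<tau>. face Qp \<tau> \<and> D = primary_comp Qp \<tau> D)"

definition primary_decomposition :: "('a::ab_group_add) set \<Rightarrow> 'a set \<Rightarrow> 'a set set \<Rightarrow> bool" where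
  "primary_decomposition Qp D Ds \<longleftrightarrow> finite Ds \<and> D = \<Union>Ds \<and> (\<forall>E\<in>Ds. coprimary Qp E)"

end

theory Submission
  imports Defs
begin

lemma down: "downset Qp D \<Longrightarrow> d \<in> D \<Longrightarrow> p \<in> Qp \<Longrightarrow> d - p \<in> D"
  unfolding downset_def by blast

lemma zero_face: "pogroup Qp \<Longrightarrow> face Qp {0}"
  unfolding pogroup_def face_def
  by (auto simp: add_eq_0_iff)

lemma gen_face:
  assumes "pogroup Qp" "face Qp \<tau>" "face Qp \<tau>'"
  shows "face Qp {x\<in>Qp. \<exists>y\<in>Qp. \<exists>a\<in>\<tau>. \<exists>b\<in>\<tau>'. x + y = a + b}"
  using assms unfolding face_def pogroup_def
proof (intro conjI)
  let ?F = "{x\<in>Qp. \<exists>y\<in>Qp. \<exists>a\<in>\<tau>. \<exists>b\<in>\<tau>'. x + y = a + b}"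
  have Q: "0 \<in> Qp" "\<And>x y. x \<in> Qp \<Longrightarrow> y \<in> Qp \<Longrightarrow> x + y \<in> Qp"
    using assms(1) unfolding pogroup_def by auto
  have T: "0 \<in> \<tau>" "\<And>x y. x \<in> \<tau> \<Longrightarrow> y \<in> \<tau> \<Longrightarrow> x + y \<in> \<tau>"
    using assms(2) unfolding face_def by auto
  have T': "0 \<in> \<tau>'" "\<And>x y. x \<in> \<tau>' \<Longrightarrow> y \<in> \<tau>' \<Longrightarrow> x + y \<in> \<tau>'"
    using assms(3) unfolding face_def by auto
  show "?F \<subseteq> Qp" by auto
  show "0 \<in> ?F" using Q T T' by force
  show "\<forall>x\<in>?F. \<forall>y\<in>?F. x + y \<in> ?F"
  proof (intro ballI)
    fix x x' assume "x \<in> ?F" "x' \<in> ?F"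
    then obtain y a b y' a' b' where h: "x \<in> Qp" "y \<in> Qp" "a \<in> \<tau>" "b \<in> \<tau>'" "x + y = a + b"
      "x' \<in> Qp" "y' \<in> Qp" "a' \<in> \<tau>" "b' \<in> \<tau>'" "x' + y' = a' + b'" by blast
    have "(x + x') + (y + y') = (a + a') + (b + b')"
      using h(5) h(10) by (simp add: algebra_simps)
    then show "x + x' \<in> ?F" using h Q T T' by blast
  qed
  show "\<forall>x\<in>Qp - ?F. \<forall>y\<in>Qp. x + y \<in> Qp - ?F"
  proof (intro ballI)
    fix x y assume x: "x \<in> Qp - ?F" and y: "y \<in> Qp"
    show "x + y \<in> Qp - ?F"
    proof
      show "x + y \<in> Qp" using x y Q by auto
      show "x + y \<notin> ?F"
      proof
        assume "x + y \<in> ?F"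
        then obtain z a b where "z \<in> Qp" "a \<in> \<tau>" "b \<in> \<tau>'" "x + y + z = a + b" by blast
        then have "x + (y + z) = a + b" "y + z \<in> Qp" using y Q by (auto simp: add.assoc)
        then have "x \<in> ?F" using x \<open>a \<in> \<tau>\<close> \<open>b \<in> \<tau>'\<close> by blast
        then show False using x by blast
      qed
    qed
  qed
qed

lemma face_part_mono: "A \<subseteq> B \<Longrightarrow> face_part A \<tau> \<subseteq> face_part B \<tau>"
  unfolding face_part_def by auto

lemma local_supp_sub: "local_supp Qp \<tau> D \<subseteq> face_part D \<tau>"
  unfolding local_supp_def glob_supp_def by auto

lemma face_part_sub: "face_part D \<tau> \<subseteq> D"
  unfolding face_part_def by auto

lemma pc_sub: "downset Qp D \<Longrightarrow> primary_comp Qp \<tau> D \<subseteq> D"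
  unfolding primary_comp_def using local_supp_sub face_part_sub down by blast

lemma pc_in: "pogroup Qp \<Longrightarrow> g \<in> local_supp Qp \<tau> D \<Longrightarrow> g \<in> primary_comp Qp \<tau> D"
  unfolding primary_comp_def pogroup_def by force

lemma pc_down: "pogroup Qp \<Longrightarrow> downset Qp (primary_comp Qp \<tau> D)"
  unfolding downset_def
proof
  assume P: "pogroup Qp"
  have Q: "0 \<in> Qp" "\<And>x y. x \<in> Qp \<Longrightarrow> y \<in> Qp \<Longrightarrow> x + y \<in> Qp"
    using P unfolding pogroup_def by auto
  show "{d - p |d p. d \<in> primary_comp Qp \<tau> D \<and> p \<in> Qp} \<subseteq> primary_comp Qp \<tau> D"
  proof
    fix x assume "x \<in> {d - p |d p. d \<in> primary_comp Qp \<tau> D \<and> p \<in> Qp}"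
    then obtain g p p' where "g \<in> local_supp Qp \<tau> D" "p \<in> Qp" "p' \<in> Qp" "x = g - p - p'"
      unfolding primary_comp_def by blast
    then have "x = g - (p + p')" "p + p' \<in> Qp" using Q by (auto simp: algebra_simps)
    then show "x \<in> primary_comp Qp \<tau> D" unfolding primary_comp_def
      using \<open>g \<in> local_supp Qp \<tau> D\<close> by blast
  qed
  show "primary_comp Qp \<tau> D \<subseteq> {d - p |d p. d \<in> primary_comp Qp \<tau> D \<and> p \<in> Qp}"
    using Q by force
qed

lemma cover:
  assumes P: "pogroup Qp" and F: "polyhedral Qp" and Dd: "downset Qp D" and q: "q \<in> D"
  shows "\<exists>\<tau>. face Qp \<tau> \<and> q \<in> local_supp Qp \<tau> D"
proof -
  let ?S = "{\<tau>. face Qp \<tau> \<and> q \<in> face_part D \<tau>}"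
  have fin: "finite ?S" using F unfolding polyhedral_def by (rule finite_subset[rotated]) auto
  have "{0} \<in> ?S" using zero_face[OF P] q unfolding face_part_def by auto
  then obtain \<tau> where t: "\<tau> \<in> ?S" and mx: "\<And>b. b \<in> ?S \<Longrightarrow> \<tau> \<subseteq> b \<Longrightarrow> \<tau> = b"
    using finite_has_maximal[OF fin] by blast
  have ft: "face Qp \<tau>" and qt: "q \<in> face_part D \<tau>" using t by auto
  have "q \<in> glob_supp Qp \<tau> (face_part D \<tau>)"
    unfolding glob_supp_def
  proof (intro CollectI conjI qt allI impI)
    fix \<tau>' assume h: "face Qp \<tau>' \<and> \<not> \<tau>' \<subseteq> \<tau>"
    show "q \<notin> face_part (face_part D \<tau>) \<tau>'"
    proof
      assume qq: "q \<in> face_part (face_part D \<tau>) \<tau>'"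
      let ?F = "{x\<in>Qp. \<exists>y\<in>Qp. \<exists>a\<in>\<tau>. \<exists>b\<in>\<tau>'. x + y = a + b}"
      have fF: "face Qp ?F" using gen_face[OF P ft] h by blast
      have z: "0 \<in> \<tau>" "0 \<in> \<tau>'" "\<tau> \<subseteq> Qp" "\<tau>' \<subseteq> Qp" "0 \<in> Qp"
        using ft h P unfolding face_def pogroup_def by auto
      have sub1: "\<tau> \<subseteq> ?F"
      proof
        fix a assume a: "a \<in> \<tau>"
        have "a + 0 = a + 0" by simp
        then show "a \<in> ?F" using a z by blast
      qed
      have sub2: "\<tau>' \<subseteq> ?F"
      proof
        fix b assume b: "b \<in> \<tau>'"
        have "b + 0 = 0 + b" by simp
        then show "b \<in> ?F" using b z by blast
      qed
      have "q \<in> face_part D ?F" unfolding face_part_def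
      proof (intro CollectI conjI ballI)
        show "q \<in> D" using q .
        fix x assume "x \<in> ?F"
        then obtain y a b where h2: "y \<in> Qp" "a \<in> \<tau>" "b \<in> \<tau>'" "x + y = a + b" by blast
        have "q + b \<in> face_part D \<tau>" using qq h2(3) unfolding face_part_def by blast
        then have "q + b + a \<in> D" using h2(2) unfolding face_part_def by blast
        then have "q + b + a - y \<in> D" using down[OF Dd] h2(1) by blast
        moreover have "q + b + a - y = q + x" using h2(4)
          by (metis add.commute add.left_commute add_diff_cancel)
        ultimately show "q + x \<in> D" by simp
      qed
      then have "?F \<in> ?S" using fF by blast
      then have "\<tau> = ?F" using mx sub1 by blast
      then show False using sub2 h by blast
    qed
  qed
  then show ?thesis using ft unfolding local_supp_def by blast
qed

lemma pres:
  assumes Dd: "downset Qp D" and ft: "face Qp \<tau>" and g: "g \<in> local_supp Qp \<tau> D"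
    and P: "pogroup Qp"
  shows "g \<in> local_supp Qp \<tau> (primary_comp Qp \<tau> D)"
proof -
  let ?E = "primary_comp Qp \<tau> D"
  have ES: "?E \<subseteq> D" using pc_sub[OF Dd] .
  have TQ: "\<tau> \<subseteq> Qp" and Tadd: "\<And>x y. x \<in> \<tau> \<Longrightarrow> y \<in> \<tau> \<Longrightarrow> x + y \<in> \<tau>"
    using ft unfolding face_def by auto
  have gt: "g \<in> face_part D \<tau>" using g local_supp_sub by blast
  have step: "g + t \<in> local_supp Qp \<tau> D" if t: "t \<in> \<tau>" for t
  proof -
    have a: "g + t \<in> face_part D \<tau>" using gt t Tadd unfolding face_part_def
      by (auto simp: add.assoc)
    have "g + t \<notin> face_part (face_part D \<tau>) \<tau>'" if h: "face Qp \<tau>' \<and> \<not> \<tau>' \<subseteq> \<tau>" for \<tau>'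
    proof
      assume gg: "g + t \<in> face_part (face_part D \<tau>) \<tau>'"
      have "\<forall>b\<in>\<tau>'. g + b \<in> face_part D \<tau>"
      proof
        fix b assume b: "b \<in> \<tau>'"
        have "g + b \<in> D \<and> (\<forall>s\<in>\<tau>. g + b + s \<in> D)"
        proof (intro conjI ballI)
          have "g + t + b \<in> face_part D \<tau>" using gg b unfolding face_part_def by blast
          then have "g + t + b \<in> D" using face_part_sub by blast
          then have "g + t + b - t \<in> D" using down[OF Dd] t TQ by blast
          then show "g + b \<in> D" by (simp add: algebra_simps)
          fix s assume s: "s \<in> \<tau>"
          have "g + t + b \<in> face_part D \<tau>" using gg b unfolding face_part_def by blast
          then have "g + t + b + s \<in> D" using s unfolding face_part_def by blast
          then have "g + t + b + s - t \<in> D" using down[OF Dd] t TQ by blast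
          then show "g + b + s \<in> D" by (simp add: algebra_simps)
        qed
        then show "g + b \<in> face_part D \<tau>" unfolding face_part_def by simp
      qed
      then have "g \<in> face_part (face_part D \<tau>) \<tau>'" using gt unfolding face_part_def[of "face_part D \<tau>"] by simp
      then show False using g h unfolding local_supp_def glob_supp_def by blast
    qed
    then show ?thesis using a unfolding local_supp_def glob_supp_def by blast
  qed
  have "g \<in> face_part ?E \<tau>" unfolding face_part_def
    using pc_in[OF P g] pc_in[OF P step] by blast
  moreover have "g \<notin> face_part (face_part ?E \<tau>) \<tau>'" if h: "face Qp \<tau>' \<and> \<not> \<tau>' \<subseteq> \<tau>" for \<tau>'
  proof -
    have "face_part (face_part ?E \<tau>) \<tau>' \<subseteq> face_part (face_part D \<tau>) \<tau>'"
      by (intro face_part_mono ES)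
    then show ?thesis using g h unfolding local_supp_def glob_supp_def by blast
  qed
  ultimately show ?thesis unfolding local_supp_def glob_supp_def by blast
qed

theorem corollary3p11:
  fixes Qp :: "('a::ab_group_add) set" and D :: "'a set"
  assumes "pogroup Qp" and "polyhedral Qp" and "downset Qp D"
  shows "D = \<Union>{primary_comp Qp \<tau> D | \<tau>. face Qp \<tau> \<and> local_supp Qp \<tau> D \<noteq> {}}
    \<and> primary_decomposition Qp D
        {primary_comp Qp \<tau> D | \<tau>. face Qp \<tau> \<and> local_supp Qp \<tau> D \<noteq> {}}"
proof -
  let ?Ds = "{primary_comp Qp \<tau> D | \<tau>. face Qp \<tau> \<and> local_supp Qp \<tau> D \<noteq> {}}"
  have eq: "D = \<Union>?Ds"
  proof
    show "D \<subseteq> \<Union>?Ds"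
    proof
      fix q assume "q \<in> D"
      then obtain \<tau> where "face Qp \<tau>" "q \<in> local_supp Qp \<tau> D"
        using cover[OF assms] by blast
      then show "q \<in> \<Union>?Ds" using pc_in[OF assms(1)] by blast
    qed
    show "\<Union>?Ds \<subseteq> D" using pc_sub[OF assms(3)] by blast
  qed
  have fin: "finite ?Ds"
  proof -
    have "?Ds \<subseteq> (\<lambda>\<tau>. primary_comp Qp \<tau> D) ` {\<tau>. face Qp \<tau>}" by blast
    then show ?thesis using assms(2) unfolding polyhedral_def
      using finite_surj by blast
  qed
  have cop: "coprimary Qp E" if "E \<in> ?Ds" for E
  proof -
    obtain \<tau> where t: "face Qp \<tau>" "E = primary_comp Qp \<tau> D" using \<open>E \<in> ?Ds\<close> by blast
    have dE: "downset Qp E" using pc_down[OF assms(1)] t by simp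
    have "primary_comp Qp \<tau> E \<subseteq> E" using pc_sub[OF dE] .
    moreover have "E \<subseteq> primary_comp Qp \<tau> E"
    proof
      fix x assume "x \<in> E"
      then obtain g p where "g \<in> local_supp Qp \<tau> D" "p \<in> Qp" "x = g - p"
        using t unfolding primary_comp_def by blast
      then have "g \<in> local_supp Qp \<tau> E" using pres[OF assms(3) t(1) _ assms(1)] t by simp
      then show "x \<in> primary_comp Qp \<tau> E" unfolding primary_comp_def
        using \<open>p \<in> Qp\<close> \<open>x = g - p\<close> by blast
    qed
    ultimately show ?thesis unfolding coprimary_def using dE t by blast
  qed
  show ?thesis using eq fin cop unfolding primary_decomposition_def by blast
qed

end
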